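(* Let $m\ge1$ be an integer with $m\equiv r\pmod{12}$, $0\le r\le 11$. If $r\notin\{2,4,6,8,10\}$, then the friendship graph $F_j$ is $\mathbb{Z}_m$-cordial for every $j\in\mathbb{N}$ with $j\le\lfloor m/2\rfloor$. If $m\equiv 2\pmod{12}$, then $F_j$ is $\mathbb{Z}_m$-cordial for every $j\in\mathbb{N}$ with $j\le\lfloor m/2\rfloor-1$.
   Context: Graphs are finite, simple and undirected. For $n\in\mathbb{N}$, the friendship graph $F_n$ is the union of $n$ copies of the triangle $C_3$ joined at a single common (central) vertex. For an abelian group $A$ and a graph $G=(V,E)$, a vertex labeling $\ell:V\to A$ induces an edge labeling $\ell(\{v_1,v_2\})=\ell(v_1)+\ell(v_2)$. Let $f_V(a)=|\{v\in V:\ell(v)=a\}|$ and $f_E(a)=|\{e\in E:\ell(e)=a\}|$. The labeling is $A$-cordial if $|f_V(a_1)-f_V(a_2)|\le 1$ and $|f_E(a_1)-f_E(a_2)|\le 1$ for all $a_1,a_2\in A$; $G$ is $A$-cordial if it admits an $A$-cordial labeling. *)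

theory Defs
  imports Main
begin

definition friendship_vertices :: "nat \<Rightarrow> nat set" where
  "friendship_vertices n = {0..2*n}"

definition friendship_edges :: "nat \<Rightarrow> nat set set" where
  "friendship_edges n =
     (\<Union>i\<in>{1..n}. {{0, 2*i - 1}, {0, 2*i}, {2*i - 1, 2*i}})"

definition vcount :: "'v set \<Rightarrow> ('v \<Rightarrow> nat) \<Rightarrow> nat \<Rightarrow> nat" where
  "vcount V l a = card {v \<in> V. l v = a}"

definition ecount :: "nat \<Rightarrow> 'v set set \<Rightarrow> ('v \<Rightarrow> nat) \<Rightarrow> nat \<Rightarrow> nat" where
  "ecount m E l a = card {e \<in> E. \<exists>u v. e = {u, v} \<and> u \<noteq> v \<and> (l u + l v) mod m = a}"

definition Zm_cordial_labeling :: "nat \<Rightarrow> 'v set \<Rightarrow> 'v set set \<Rightarrow> ('v \<Rightarrow> nat) \<Rightarrow> bool" where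
  "Zm_cordial_labeling m V E l \<longleftrightarrow>
     (\<forall>v\<in>V. l v < m) \<and>
     (\<forall>a1<m. \<forall>a2<m.
        \<bar>int (vcount V l a1) - int (vcount V l a2)\<bar> \<le> 1 \<and>
        \<bar>int (ecount m E l a1) - int (ecount m E l a2)\<bar> \<le> 1)"

definition Zm_cordial :: "nat \<Rightarrow> 'v set \<Rightarrow> 'v set set \<Rightarrow> bool" where
  "Zm_cordial m V E \<longleftrightarrow> (\<exists>l. Zm_cordial_labeling m V E l)"

end

theory Submission
  imports Defs
begin

definition cnt :: "nat \<Rightarrow> (nat \<Rightarrow> int) \<Rightarrow> int \<Rightarrow> nat" where
  "cnt j F z = card {a \<in> {0..<j}. F a = z}"

lemma card_filter_image:
  assumes "inj_on f A"
  shows "card {e \<in> f ` A. P e} = card {a \<in> A. P (f a)}"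
proof -
  have "{e \<in> f ` A. P e} = f ` {a \<in> A. P (f a)}" by auto
  moreover have "inj_on f {a \<in> A. P (f a)}" using assms by (rule inj_on_subset) auto
  ultimately show ?thesis by (simp add: card_image)
qed

lemma edges_as_images:
  "friendship_edges j =
     (\<lambda>a. {0, 2*a+1}) ` {0..<j} \<union> (\<lambda>a. {0, 2*a+2}) ` {0..<j} \<union> (\<lambda>a. {2*a+1, 2*a+2}) ` {0..<j}"
  (is "_ = ?R")
proof (rule set_eqI)
  fix e
  show "e \<in> friendship_edges j \<longleftrightarrow> e \<in> ?R"
  proof
    assume "e \<in> friendship_edges j"
    then obtain i where i: "i \<in> {1..j}" and e: "e \<in> {{0, 2*i-1}, {0,2*i}, {2*i-1, 2*i}}"
      unfolding friendship_edges_def by blast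
    define a where "a = i - 1"
    have h: "2*i - 1 = 2*a+1" "2*i = 2*a+2" "a \<in> {0..<j}" using i by (auto simp: a_def)
    show "e \<in> ?R" using e h by auto
  next
    assume "e \<in> ?R"
    then obtain a where a: "a < j" and e: "e = {0, 2*a+1} \<or> e = {0, 2*a+2} \<or> e = {2*a+1, 2*a+2}"
      by auto
    have h: "2*(a+1) - 1 = 2*a+1" "2*(a+1) = 2*a+2" "a+1 \<in> {1..j}" using a by auto
    show "e \<in> friendship_edges j" unfolding friendship_edges_def
      using e h by (intro UN_I[of "a+1"]) auto
  qed
qed

lemma doubleton_sum:
  assumes "{u, v} = {x, y}" shows "f u + f v = f x + (f y :: nat)"
  using assms by (auto simp: doubleton_eq_iff)

lemma cordial_of_counts:
  fixes m j :: nat and X Y S :: "nat \<Rightarrow> int" and w :: int and cv ce :: nat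
  assumes m: "m \<ge> 1"
  and win: "\<And>a. a < j \<Longrightarrow> w \<le> X a \<and> X a < w + int m \<and> w \<le> Y a \<and> Y a < w + int m
                 \<and> w \<le> S a \<and> S a < w + int m"
  and Sc: "\<And>a. a < j \<Longrightarrow> S a mod int m = (X a + Y a) mod int m"
  and vc: "\<And>z. w \<le> z \<Longrightarrow> z < w + int m \<Longrightarrow>
      cv \<le> (if z mod int m = 0 then 1 else 0) + cnt j X z + cnt j Y z \<and>
      (if z mod int m = 0 then 1 else 0) + cnt j X z + cnt j Y z \<le> cv + 1"
  and ec: "\<And>z. w \<le> z \<Longrightarrow> z < w + int m \<Longrightarrow>
      ce \<le> cnt j X z + cnt j Y z + cnt j S z \<and> cnt j X z + cnt j Y z + cnt j S z \<le> ce + 1"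
  shows "Zm_cordial m (friendship_vertices j) (friendship_edges j)"
proof -
  define l where "l v = (if v = 0 then 0 else if odd v then nat (X ((v-1) div 2) mod int m)
                          else nat (Y ((v-2) div 2) mod int m))" for v
  have mpos: "int m > 0" using m by simp
  have l0: "l 0 = 0" by (simp add: l_def)
  have l1: "l (2*a+1) = nat (X a mod int m)" for a by (simp add: l_def)
  have l2: "l (2*a+2) = nat (Y a mod int m)" for a by (simp add: l_def)
  have l1s: "l (Suc (2*a)) = nat (X a mod int m)" for a by (simp add: l_def)
  have l2s: "l (Suc (Suc (2*a))) = nat (Y a mod int m)" for a by (simp add: l_def)
  have lt: "l v < m" for v using mpos m
    by (auto simp: l_def nat_less_iff)
  define rep where "rep b = w + (int b - w) mod int m" for b :: nat
  have rep_win: "w \<le> rep b \<and> rep b < w + int m" for b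
    using mpos by (simp add: rep_def)
  have rep_eq: "x mod int m = int b \<longleftrightarrow> x = rep b" if "b < m" "w \<le> x" "x < w + int m" for x b
  proof
    assume h: "x mod int m = int b"
    have "(x - w) mod int m = (int b - w) mod int m"
      using h by (metis mod_diff_left_eq)
    moreover have "(x - w) mod int m = x - w" using that by (simp add: mod_pos_pos_trivial)
    ultimately show "x = rep b" by (simp add: rep_def)
  next
    assume "x = rep b"
    then have "x mod int m = (w + (int b - w) mod int m) mod int m" by (simp add: rep_def)
    also have "\<dots> = (w + (int b - w)) mod int m" by (simp add: mod_add_right_eq)
    also have "\<dots> = int b" using that by simp
    finally show "x mod int m = int b" .
  qed
  have cnt_rep: "card {a \<in> {0..<j}. F a mod int m = int b} = cnt j F (rep b)"
    if "b < m" "\<And>a. a < j \<Longrightarrow> w \<le> F a \<and> F a < w + int m" for F b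
    unfolding cnt_def using rep_eq[OF that(1)] that(2)
    by (intro arg_cong[where f=card]) auto
  have nat_eq: "nat (x mod int m) = b \<longleftrightarrow> x mod int m = int b" for x b
    using mpos by auto
  have vset: "{v \<in> friendship_vertices j. l v = b} =
      (if b = 0 then {0} else {}) \<union> (\<lambda>a. 2*a+1) ` {a \<in> {0..<j}. X a mod int m = int b}
        \<union> (\<lambda>a. 2*a+2) ` {a \<in> {0..<j}. Y a mod int m = int b}" for b
  proof (rule set_eqI)
    fix v
    show "v \<in> {v \<in> friendship_vertices j. l v = b} \<longleftrightarrow> v \<in> (if b = 0 then {0} else {}) \<union> (\<lambda>a. 2*a+1) ` {a \<in> {0..<j}. X a mod int m = int b}
        \<union> (\<lambda>a. 2*a+2) ` {a \<in> {0..<j}. Y a mod int m = int b}"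
    proof (cases "v = 0")
      case True then show ?thesis by (auto simp: friendship_vertices_def l0)
    next
      case False
      show ?thesis
      proof (cases "odd v")
        case True
        then obtain a where a: "v = 2*a+1" by (metis oddE)
        have "v \<in> friendship_vertices j \<longleftrightarrow> a < j" using a by (auto simp: friendship_vertices_def)
        have ne: "\<And>x. 2*a+1 \<noteq> 2*x+(2::nat)" by presburger
        then show ?thesis using a False l1[of a] nat_eq \<open>v \<in> friendship_vertices j \<longleftrightarrow> a < j\<close> by auto
      next
        case ev: False
        then obtain a where a: "v = 2*a+2" using False
          by (metis evenE Suc_1 add.commute mult_0_right mult_Suc_right neq0_conv
                    not0_implies_Suc plus_1_eq_Suc add_Suc_right)
        have "v \<in> friendship_vertices j \<longleftrightarrow> a < j" using a by (auto simp: friendship_vertices_def)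
        have ne: "\<And>x. 2*a+2 \<noteq> 2*x+(1::nat)" by presburger
        then show ?thesis using a False l2[of a] nat_eq \<open>v \<in> friendship_vertices j \<longleftrightarrow> a < j\<close> by auto
      qed
    qed
  qed
  have vcount_eq: "vcount (friendship_vertices j) l b =
      (if b = 0 then 1 else 0) + card {a \<in> {0..<j}. X a mod int m = int b}
       + card {a \<in> {0..<j}. Y a mod int m = int b}" for b
  proof -
    have i1: "inj_on (\<lambda>a::nat. 2*a+1) A" for A by (auto simp: inj_on_def)
    have i2: "inj_on (\<lambda>a::nat. 2*a+2) A" for A by (auto simp: inj_on_def)
    have d1: "(\<lambda>a. 2*a+1) ` A \<inter> (\<lambda>a::nat. 2*a+2) ` B = {}" for A B by auto presburger
    show ?thesis unfolding vcount_def vset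
      apply (subst card_Un_disjoint)
      using d1 apply (auto)[3]
      apply (subst card_Un_disjoint)
      using d1 apply (auto)[3]
      apply (simp only: card_image[OF i1] card_image[OF i2])
      by simp
  qed
  have vcnt: "int (vcount (friendship_vertices j) l b) =
      (if rep b mod int m = 0 then 1 else 0) + int (cnt j X (rep b)) + int (cnt j Y (rep b))" if "b < m" for b
  proof -
    have "(b = 0) = (rep b mod int m = 0)"
      using rep_eq[OF that rep_win[THEN conjunct1] rep_win[THEN conjunct2], of b] by simp
    then show ?thesis unfolding vcount_eq
      using cnt_rep[OF that, of X] cnt_rep[OF that, of Y] win by auto
  qed
  let ?P = "\<lambda>b e. \<exists>u v. e = {u, v} \<and> u \<noteq> v \<and> (l u + l v) mod m = b"
  have P1: "?P b {0, 2*a+1} \<longleftrightarrow> X a mod int m = int b" for a b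
  proof -
    have "?P b {0, 2*a+1} \<longleftrightarrow> (l 0 + l (2*a+1)) mod m = b"
      by (auto simp: doubleton_eq_iff add.commute)
    also have "\<dots> \<longleftrightarrow> X a mod int m = int b" using lt[of "2*a+1"] l0 l1 nat_eq by auto
    finally show ?thesis .
  qed
  have P2: "?P b {0, 2*a+2} \<longleftrightarrow> Y a mod int m = int b" for a b
  proof -
    have "?P b {0, 2*a+2} \<longleftrightarrow> (l 0 + l (2*a+2)) mod m = b"
      by (auto simp: doubleton_eq_iff add.commute)
    also have "\<dots> \<longleftrightarrow> Y a mod int m = int b" using lt[of "2*a+2"] l0 l2 nat_eq by auto
    finally show ?thesis .
  qed
  have P3: "?P b {2*a+1, 2*a+2} \<longleftrightarrow> (X a + Y a) mod int m = int b" for a b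
  proof -
    have "?P b {2*a+1, 2*a+2} \<longleftrightarrow> (l (2*a+1) + l (2*a+2)) mod m = b"
    proof
      assume "?P b {2*a+1, 2*a+2}" then show "(l (2*a+1) + l (2*a+2)) mod m = b"
        by (auto simp: doubleton_eq_iff add.commute)
    next
      assume "(l (2*a+1) + l (2*a+2)) mod m = b"
      then show "?P b {2*a+1, 2*a+2}" by (intro exI[of _ "2*a+1"] exI[of _ "2*a+2"]) auto
    qed
    also have "\<dots> \<longleftrightarrow> (X a + Y a) mod int m = int b"
    proof -
      have "int ((l (2*a+1) + l (2*a+2)) mod m) = (int (l (2*a+1)) + int (l (2*a+2))) mod int m"
        by (simp only: zmod_int of_nat_add)
      also have "\<dots> = (X a mod int m + Y a mod int m) mod int m"
        unfolding l1 l2 using mpos by simp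
      also have "\<dots> = (X a + Y a) mod int m" by (simp add: mod_add_eq)
      finally show ?thesis by linarith
    qed
    finally show ?thesis .
  qed
  have ecount_eq: "ecount m (friendship_edges j) l b =
      card {a \<in> {0..<j}. X a mod int m = int b} + card {a \<in> {0..<j}. Y a mod int m = int b}
       + card {a \<in> {0..<j}. (X a + Y a) mod int m = int b}" for b
  proof -
    let ?e1 = "\<lambda>a::nat. {0::nat, 2*a+1}" and ?e2 = "\<lambda>a::nat. {0::nat, 2*a+2}"
      and ?e3 = "\<lambda>a::nat. {2*a+1, 2*a+2}"
    have i1: "inj_on ?e1 A" for A by (auto simp: inj_on_def doubleton_eq_iff)
    have i2: "inj_on ?e2 A" for A by (auto simp: inj_on_def doubleton_eq_iff)
    have i3: "inj_on ?e3 A" for A by (auto simp: inj_on_def doubleton_eq_iff)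
    have d12: "?e1 ` A \<inter> ?e2 ` B = {}" for A B
    proof -
      have "Suc (2*x) \<noteq> Suc (Suc (2*y))" for x y :: nat by presburger
      then show ?thesis by (auto simp: doubleton_eq_iff)
    qed
    have d13: "(?e1 ` A \<union> ?e2 ` B) \<inter> ?e3 ` C = {}" for A B C by (auto simp: doubleton_eq_iff)
    have fin: "finite (?e1 ` A)" "finite (?e2 ` A)" "finite (?e3 ` A)" if "finite A" for A
      using that by auto
    have split: "{e \<in> A \<union> B. Q e} = {e \<in> A. Q e} \<union> {e \<in> B. Q e}" for A B :: "nat set set" and Q
      by auto
    have "ecount m (friendship_edges j) l b =
        card {e \<in> ?e1 ` {0..<j}. ?P b e} + card {e \<in> ?e2 ` {0..<j}. ?P b e} + card {e \<in> ?e3 ` {0..<j}. ?P b e}"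
      unfolding ecount_def edges_as_images split
      apply (subst card_Un_disjoint)
      apply simp
      apply simp
      using d13[of "{0..<j}" "{0..<j}" "{0..<j}"] apply blast
      apply (subst card_Un_disjoint)
      apply simp
      apply simp
      using d12[of "{0..<j}" "{0..<j}"] apply blast
      by simp
    also have "\<dots> = card {a \<in> {0..<j}. X a mod int m = int b} + card {a \<in> {0..<j}. Y a mod int m = int b}
       + card {a \<in> {0..<j}. (X a + Y a) mod int m = int b}"
      unfolding card_filter_image[OF i1] card_filter_image[OF i2] card_filter_image[OF i3] P1 P2 P3 ..
    finally show ?thesis .
  qed
  have ecnt: "int (ecount m (friendship_edges j) l b) =
      int (cnt j X (rep b)) + int (cnt j Y (rep b)) + int (cnt j S (rep b))" if "b < m" for b
  proof -
    have "card {a \<in> {0..<j}. (X a + Y a) mod int m = int b} = card {a \<in> {0..<j}. S a mod int m = int b}"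
      using Sc by (intro arg_cong[where f=card]) auto
    then show ?thesis unfolding ecount_eq
      using cnt_rep[OF that, of X] cnt_rep[OF that, of Y] cnt_rep[OF that, of S] win by auto
  qed
  have vb: "cv \<le> vcount (friendship_vertices j) l b \<and> vcount (friendship_vertices j) l b \<le> cv + 1"
    if "b < m" for b
    using vcnt[OF that] vc[OF rep_win[THEN conjunct1] rep_win[THEN conjunct2], of b]
    by (cases "rep b mod int m = 0") auto
  have eb: "ce \<le> ecount m (friendship_edges j) l b \<and> ecount m (friendship_edges j) l b \<le> ce + 1"
    if "b < m" for b
    using ecnt[OF that] ec[OF rep_win[THEN conjunct1] rep_win[THEN conjunct2], of b] by linarith
  have "Zm_cordial_labeling m (friendship_vertices j) (friendship_edges j) l"
    unfolding Zm_cordial_labeling_def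
  proof (intro conjI ballI allI impI)
    fix v show "l v < m" by (rule lt)
  next
    fix a1 a2 assume "a1 < m" "a2 < m"
    then show "\<bar>int (vcount (friendship_vertices j) l a1) - int (vcount (friendship_vertices j) l a2)\<bar> \<le> 1"
      using vb[of a1] vb[of a2] by linarith
  next
    fix a1 a2 assume "a1 < m" "a2 < m"
    then show "\<bar>int (ecount m (friendship_edges j) l a1) - int (ecount m (friendship_edges j) l a2)\<bar> \<le> 1"
      using eb[of a1] eb[of a2] by linarith
  qed
  then show ?thesis unfolding Zm_cordial_def by blast
qed


lemma card_filter_inj:
  assumes "inj_on f A"
  shows "card {a \<in> A. f a = z} = (if \<exists>a\<in>A. f a = z then 1 else 0)"
proof (cases "\<exists>a\<in>A. f a = z")
  case True
  then obtain a where a: "a \<in> A" "f a = z" by blast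
  then have "{a \<in> A. f a = z} = {a}" using assms by (auto simp: inj_on_def)
  then show ?thesis using True by simp
next
  case False
  then have e: "{a \<in> A. f a = z} = {}" by auto
  show ?thesis unfolding e using False by simp
qed

lemma cnt_inj:
  assumes "inj_on F {0..<n}"
  shows "cnt n F z = (if \<exists>a<n. F a = z then 1 else 0)"
  unfolding cnt_def using card_filter_inj[OF assms] by simp

definition app :: "nat \<Rightarrow> (nat \<Rightarrow> int) \<Rightarrow> (nat \<Rightarrow> int) \<Rightarrow> nat \<Rightarrow> int" where
  "app n1 F1 F2 a = (if a < n1 then F1 a else F2 (a - n1))"

lemma cnt_app: "cnt (n1 + n2) (app n1 F1 F2) z = cnt n1 F1 z + cnt n2 F2 z"
proof -
  have e: "{a \<in> {0..<n1+n2}. app n1 F1 F2 a = z} =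
        {a \<in> {0..<n1}. F1 a = z} \<union> (\<lambda>b. b + n1) ` {b \<in> {0..<n2}. F2 b = z}"
  proof (rule set_eqI)
    fix a
    show "a \<in> {a \<in> {0..<n1+n2}. app n1 F1 F2 a = z} \<longleftrightarrow>
          a \<in> {a \<in> {0..<n1}. F1 a = z} \<union> (\<lambda>b. b + n1) ` {b \<in> {0..<n2}. F2 b = z}"
    proof (cases "a < n1")
      case True then show ?thesis by (auto simp: app_def)
    next
      case False
      then have "a = (a - n1) + n1" by simp
      then show ?thesis using False by (auto simp: app_def intro!: image_eqI[of a _ "a - n1"])
    qed
  qed
  have "card ({a \<in> {0..<n1}. F1 a = z} \<union> (\<lambda>b. b + n1) ` {b \<in> {0..<n2}. F2 b = z})
        = card {a \<in> {0..<n1}. F1 a = z} + card ((\<lambda>b. b + n1) ` {b \<in> {0..<n2}. F2 b = z})"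
    by (rule card_Un_disjoint) auto
  also have "card ((\<lambda>b. b + n1) ` {b \<in> {0..<n2}. F2 b = z}) = card {b \<in> {0..<n2}. F2 b = z}"
    by (rule card_image) (auto simp: inj_on_def)
  finally show ?thesis unfolding cnt_def e .
qed

lemma cnt_single: "cnt 1 (\<lambda>a. c) z = (if c = z then 1 else 0)"
  unfolding cnt_def by auto

lemma cnt_X: "cnt n (\<lambda>a. p0 + int a) z = (if p0 \<le> z \<and> z < p0 + int n then 1 else 0)"
proof -
  have "inj_on (\<lambda>a. p0 + int a) {0..<n}" by (auto simp: inj_on_def)
  moreover have "(\<exists>a<n. p0 + int a = z) \<longleftrightarrow> p0 \<le> z \<and> z < p0 + int n"
  proof
    assume "p0 \<le> z \<and> z < p0 + int n"
    then show "\<exists>a<n. p0 + int a = z" by (intro exI[of _ "nat (z - p0)"]) auto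
  qed auto
  ultimately show ?thesis by (simp add: cnt_inj)
qed

definition po :: "nat \<Rightarrow> nat \<Rightarrow> nat" where
  "po s a = (if a \<le> s then 2*a else 2*(a-s) - 1)"
definition pe :: "nat \<Rightarrow> nat \<Rightarrow> nat" where
  "pe s a = (if a < s then 2*a+1 else 2*(a-s))"
definition pp :: "nat \<Rightarrow> nat \<Rightarrow> nat" where
  "pp n a = (if odd n then po (n div 2) a else pe (n div 2) a)"

lemma pp_lt: "a < n \<Longrightarrow> pp n a < n"
  unfolding pp_def po_def pe_def by (cases "odd n") (auto elim!: oddE evenE)

lemma pp_inj: "inj_on (pp n) {0..<n}"
  unfolding pp_def po_def pe_def inj_on_def
  apply (cases "odd n")
  apply (auto elim!: oddE evenE split: if_splits)
  by presburger+

lemma pp_surj: "b < n \<Longrightarrow> \<exists>a<n. pp n a = b"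
proof -
  assume b: "b < n"
  show ?thesis
  proof (cases "odd n")
    case True
    then obtain s where n: "n = 2*s+1" by (metis oddE)
    show ?thesis
    proof (cases "even b")
      case True
      then obtain c where "b = 2*c" by (metis evenE)
      then show ?thesis using n b by (intro exI[of _ c]) (auto simp: pp_def po_def)
    next
      case False
      then obtain c where "b = 2*c+1" by (metis oddE)
      then show ?thesis using n b by (intro exI[of _ "c + 1 + s"]) (auto simp: pp_def po_def)
    qed
  next
    case False
    then obtain s where n: "n = 2*s" by (metis evenE)
    show ?thesis
    proof (cases "even b")
      case True
      then obtain c where "b = 2*c" by (metis evenE)
      then show ?thesis using n b by (intro exI[of _ "c + s"]) (auto simp: pp_def pe_def)
    next
      case False
      then obtain c where "b = 2*c+1" by (metis oddE)
      then show ?thesis using n b by (intro exI[of _ c]) (auto simp: pp_def pe_def)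
    qed
  qed
qed

lemma cnt_Y: "cnt n (\<lambda>a. -(p0 + int (pp n a))) z = (if -(p0 + int n) < z \<and> z \<le> -p0 then 1 else 0)"
proof -
  have "inj_on (\<lambda>a. -(p0 + int (pp n a))) {0..<n}"
    using pp_inj[of n] by (auto simp: inj_on_def)
  moreover have "(\<exists>a<n. -(p0 + int (pp n a)) = z) \<longleftrightarrow> -(p0 + int n) < z \<and> z \<le> -p0"
  proof
    assume "\<exists>a<n. -(p0 + int (pp n a)) = z"
    then show "-(p0 + int n) < z \<and> z \<le> -p0" using pp_lt by force
  next
    assume h: "-(p0 + int n) < z \<and> z \<le> -p0"
    then have "nat (- z - p0) < n" by auto
    then obtain a where "a < n" "pp n a = nat (- z - p0)" using pp_surj[of "nat (- z - p0)" n] by blast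
    then show "\<exists>a<n. -(p0 + int (pp n a)) = z" using h by (intro exI[of _ a]) auto
  qed
  ultimately show ?thesis by (simp add: cnt_inj)
qed

lemma d_inj: "inj_on (\<lambda>a. int a - int (pp n a)) {0..<n}"
  unfolding pp_def po_def pe_def inj_on_def by (cases "odd n") (auto elim!: oddE evenE split: if_splits)

lemma d_char: "(\<exists>a<n. int a - int (pp n a) = z) \<longleftrightarrow> \<bar>z\<bar> \<le> int (n div 2) \<and> (odd n \<or> z \<noteq> 0)"
proof
  assume "\<exists>a<n. int a - int (pp n a) = z"
  then obtain a where a: "a < n" "int a - int (pp n a) = z" by blast
  then show "\<bar>z\<bar> \<le> int (n div 2) \<and> (odd n \<or> z \<noteq> 0)"
    unfolding pp_def po_def pe_def by (cases "odd n") (auto elim!: oddE evenE split: if_splits)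
next
  assume h: "\<bar>z\<bar> \<le> int (n div 2) \<and> (odd n \<or> z \<noteq> 0)"
  show "\<exists>a<n. int a - int (pp n a) = z"
  proof (cases "odd n")
    case True
    then obtain s where n: "n = 2*s+1" by (metis oddE)
    show ?thesis
    proof (cases "z \<le> 0")
      case True
      then show ?thesis using n h by (intro exI[of _ "nat (-z)"]) (auto simp: pp_def po_def)
    next
      case False
      then show ?thesis using n h by (intro exI[of _ "nat (2*int s + 1 - z)"]) (auto simp: pp_def po_def)
    qed
  next
    case False
    then obtain s where n: "n = 2*s" by (metis evenE)
    show ?thesis
    proof (cases "z < 0")
      case True
      then show ?thesis using n h by (intro exI[of _ "nat (-z - 1)"]) (auto simp: pp_def pe_def)
    next
      case False
      then show ?thesis using n h by (intro exI[of _ "nat (2*int s - z)"]) (auto simp: pp_def pe_def)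
    qed
  qed
qed

lemma cnt_S: "cnt n (\<lambda>a. int a - int (pp n a)) z = (if \<bar>z\<bar> \<le> int (n div 2) \<and> (odd n \<or> z \<noteq> 0) then 1 else 0)"
  using cnt_inj[OF d_inj, of n z] d_char[of n z] by simp

lemma d_bound: "a < n \<Longrightarrow> \<bar>int a - int (pp n a)\<bar> \<le> int (n div 2)"
  using d_char[of n "int a - int (pp n a)"] by blast


lemma mod_win0:
  fixes z w M :: int
  assumes "0 < M" "w \<le> z" "z < w + M" "w \<le> 0" "0 < w + M"
  shows "(z mod M = 0) \<longleftrightarrow> z = 0"
proof
  assume h: "z mod M = 0"
  show "z = 0"
  proof (rule ccontr)
    assume nz: "z \<noteq> 0"
    show False
    proof (cases "z > 0")
      case True
      then have "z mod M = z" using assms by (intro mod_pos_pos_trivial) auto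
      then show False using h True by simp
    next
      case False
      then have "(z + M) mod M = z + M" using assms nz by (intro mod_pos_pos_trivial) auto
      moreover have "z + M > 0" using assms by linarith
      ultimately show False using h by simp
    qed
  qed
qed simp

lemma C1:
  assumes m: "m = 2*k+1" and j: "1 \<le> j" "j \<le> k" and c: "odd j \<or> 3*j \<le> m"
  shows "Zm_cordial m (friendship_vertices j) (friendship_edges j)"
proof -
  define p0 where "p0 = int k - int j + 1"
  define X where "X = (\<lambda>a. p0 + int a)"
  define Y where "Y = (\<lambda>a. -(p0 + int (pp j a)))"
  define S where "S = (\<lambda>a. int a - int (pp j a))"
  have cX: "cnt j X z = (if p0 \<le> z \<and> z < p0 + int j then 1 else 0)" for z
    unfolding X_def by (rule cnt_X)
  have cY: "cnt j Y z = (if -(p0 + int j) < z \<and> z \<le> -p0 then 1 else 0)" for z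
    unfolding Y_def by (rule cnt_Y)
  have cS: "cnt j S z = (if \<bar>z\<bar> \<le> int (j div 2) \<and> (odd j \<or> z \<noteq> 0) then 1 else 0)" for z
    unfolding S_def by (rule cnt_S)
  obtain s where s: "j = 2*s+1 \<or> j = 2*s" by (metis evenE oddE)
  have jd: "j div 2 = s" using s by auto
  show ?thesis
  proof (rule cordial_of_counts[where w = "-int k" and cv = 0 and ce = "if 3*j \<le> m then 0 else 1"])
    show "m \<ge> 1" using m by simp
  next
    fix a assume a: "a < j"
    have "pp j a < j" using pp_lt[OF a] .
    moreover have "\<bar>S a\<bar> \<le> int (j div 2)" unfolding S_def using d_bound[OF a] .
    ultimately show "-int k \<le> X a \<and> X a < -int k + int m \<and> -int k \<le> Y a \<and> Y a < -int k + int m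
                 \<and> -int k \<le> S a \<and> S a < -int k + int m"
      using a j m jd s unfolding X_def Y_def p0_def by auto
  next
    fix a assume "a < j"
    show "S a mod int m = (X a + Y a) mod int m" unfolding S_def X_def Y_def by simp
  next
    fix z assume z: "-int k \<le> z" "z < -int k + int m"
    have "(z mod int m = 0) = (z = 0)" using z m by (intro mod_win0) auto
    then show "0 \<le> (if z mod int m = 0 then 1 else 0) + cnt j X z + cnt j Y z \<and>
      (if z mod int m = 0 then 1 else 0) + cnt j X z + cnt j Y z \<le> 0 + 1"
      unfolding cX cY p0_def using j by auto
  next
    fix z assume z: "-int k \<le> z" "z < -int k + int m"
    show "(if 3*j \<le> m then 0 else 1) \<le> cnt j X z + cnt j Y z + cnt j S z \<and>
          cnt j X z + cnt j Y z + cnt j S z \<le> (if 3*j \<le> m then 0 else 1) + 1"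
      unfolding cX cY cS p0_def jd using j z m c s by auto
  qed
qed

lemma C3:
  assumes m: "m = 2*k" and j: "1 \<le> j" and c: "3*j < m"
  shows "Zm_cordial m (friendship_vertices j) (friendship_edges j)"
proof -
  define p0 where "p0 = int k - int j"
  define X where "X = (\<lambda>a. p0 + int a)"
  define Y where "Y = (\<lambda>a. -(p0 + int (pp j a)))"
  define S where "S = (\<lambda>a. int a - int (pp j a))"
  have cX: "cnt j X z = (if p0 \<le> z \<and> z < p0 + int j then 1 else 0)" for z
    unfolding X_def by (rule cnt_X)
  have cY: "cnt j Y z = (if -(p0 + int j) < z \<and> z \<le> -p0 then 1 else 0)" for z
    unfolding Y_def by (rule cnt_Y)
  have cS: "cnt j S z = (if \<bar>z\<bar> \<le> int (j div 2) \<and> (odd j \<or> z \<noteq> 0) then 1 else 0)" for z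
    unfolding S_def by (rule cnt_S)
  obtain s where s: "j = 2*s+1 \<or> j = 2*s" by (metis evenE oddE)
  have jd: "j div 2 = s" using s by auto
  show ?thesis
  proof (rule cordial_of_counts[where w = "-int k + 1" and cv = 0 and ce = 0])
    show "m \<ge> 1" using m c by simp
  next
    fix a assume a: "a < j"
    have "pp j a < j" using pp_lt[OF a] .
    moreover have "\<bar>S a\<bar> \<le> int (j div 2)" unfolding S_def using d_bound[OF a] .
    ultimately show "-int k + 1 \<le> X a \<and> X a < -int k + 1 + int m \<and> -int k + 1 \<le> Y a \<and> Y a < -int k + 1 + int m
                 \<and> -int k + 1 \<le> S a \<and> S a < -int k + 1 + int m"
      using a j m c jd s unfolding X_def Y_def p0_def by auto
  next
    fix a assume "a < j"
    show "S a mod int m = (X a + Y a) mod int m" unfolding S_def X_def Y_def by simp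
  next
    fix z assume z: "-int k + 1 \<le> z" "z < -int k + 1 + int m"
    have "(z mod int m = 0) = (z = 0)" using z m c by (intro mod_win0) auto
    then show "0 \<le> (if z mod int m = 0 then 1 else 0) + cnt j X z + cnt j Y z \<and>
      (if z mod int m = 0 then 1 else 0) + cnt j X z + cnt j Y z \<le> 0 + 1"
      unfolding cX cY p0_def using j c m by auto
  next
    fix z assume z: "-int k + 1 \<le> z" "z < -int k + 1 + int m"
    show "0 \<le> cnt j X z + cnt j Y z + cnt j S z \<and>
          cnt j X z + cnt j Y z + cnt j S z \<le> 0 + 1"
      unfolding cX cY cS p0_def jd using j z m c s by auto
  qed
qed

lemma C2:
  assumes m: "m = 2*k+1" and j: "2 \<le> j" "j \<le> k" and ev: "even j" and c: "m < 3*j"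
  shows "Zm_cordial m (friendship_vertices j) (friendship_edges j)"
proof -
  define n where "n = j - 1"
  have jn: "j = n + 1" using j by (simp add: n_def)
  define p0 where "p0 = int k - int j + 1"
  define X where "X = (\<lambda>a. p0 + int a)"
  define Y where "Y = app n (\<lambda>a. -(p0 + int (pp n a))) (\<lambda>a. -(p0 + int n))"
  define S where "S = app n (\<lambda>a. int a - int (pp n a)) (\<lambda>a. 0)"
  have cX: "cnt j X z = (if p0 \<le> z \<and> z < p0 + int j then 1 else 0)" for z
    unfolding X_def by (rule cnt_X)
  have cY: "cnt j Y z = (if -(p0 + int n) < z \<and> z \<le> -p0 then 1 else 0) + (if -(p0 + int n) = z then 1 else 0)" for z
    unfolding Y_def jn cnt_app cnt_Y cnt_single ..
  have cS: "cnt j S z = (if \<bar>z\<bar> \<le> int (n div 2) \<and> (odd n \<or> z \<noteq> 0) then 1 else 0) + (if 0 = z then 1 else 0)" for z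
    unfolding S_def jn cnt_app cnt_S cnt_single ..
  obtain s where s: "n = 2*s+1" using ev jn by (metis even_add odd_one oddE)
  have jd: "n div 2 = s" "odd n" using s by auto
  show ?thesis
  proof (rule cordial_of_counts[where w = "-int k" and cv = 0 and ce = 1])
    show "m \<ge> 1" using m by simp
  next
    fix a assume a: "a < j"
    show "-int k \<le> X a \<and> X a < -int k + int m \<and> -int k \<le> Y a \<and> Y a < -int k + int m
                 \<and> -int k \<le> S a \<and> S a < -int k + int m"
    proof (cases "a < n")
      case True
      have "pp n a < n" using pp_lt[OF True] .
      moreover have "\<bar>int a - int (pp n a)\<bar> \<le> int (n div 2)" using d_bound[OF True] .
      ultimately show ?thesis using True a j m jd s jn unfolding X_def Y_def S_def app_def p0_def by auto
    next
      case False
      then show ?thesis using a j m jn unfolding X_def Y_def S_def app_def p0_def by auto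
    qed
  next
    fix a assume a: "a < j"
    have "a < n \<or> a = n" using a jn by auto
    then show "S a mod int m = (X a + Y a) mod int m"
      unfolding S_def X_def Y_def app_def by auto
  next
    fix z assume z: "-int k \<le> z" "z < -int k + int m"
    have "(z mod int m = 0) = (z = 0)" using z m by (intro mod_win0) auto
    then show "0 \<le> (if z mod int m = 0 then 1 else 0) + cnt j X z + cnt j Y z \<and>
      (if z mod int m = 0 then 1 else 0) + cnt j X z + cnt j Y z \<le> 0 + 1"
      unfolding cX cY p0_def using j jn by auto
  next
    fix z assume z: "-int k \<le> z" "z < -int k + int m"
    show "1 \<le> cnt j X z + cnt j Y z + cnt j S z \<and>
          cnt j X z + cnt j Y z + cnt j S z \<le> 1 + 1"
      unfolding cX cY cS p0_def jd using j z m c s jn by auto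
  qed
qed


lemma C5:
  assumes m: "m = 2*k" and k: "k \<ge> 2" "even k"
  shows "Zm_cordial m (friendship_vertices k) (friendship_edges k)"
proof -
  define n where "n = k - 1"
  have jn: "k = n + 1" using k by (simp add: n_def)
  define X where "X = app n (\<lambda>a. 1 + int a) (\<lambda>a. 0)"
  define Y where "Y = app n (\<lambda>a. -(1 + int (pp n a))) (\<lambda>a. int k)"
  define S where "S = app n (\<lambda>a. int a - int (pp n a)) (\<lambda>a. int k)"
  have cX: "cnt k X z = (if 1 \<le> z \<and> z < 1 + int n then 1 else 0) + (if 0 = z then 1 else 0)" for z
    unfolding X_def jn cnt_app cnt_X cnt_single ..
  have cY: "cnt k Y z = (if -(1 + int n) < z \<and> z \<le> -1 then 1 else 0) + (if int k = z then 1 else 0)" for z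
    unfolding Y_def jn cnt_app cnt_Y cnt_single ..
  have cS: "cnt k S z = (if \<bar>z\<bar> \<le> int (n div 2) \<and> (odd n \<or> z \<noteq> 0) then 1 else 0) + (if int k = z then 1 else 0)" for z
    unfolding S_def jn cnt_app cnt_S cnt_single ..
  have on: "odd n" using k jn by simp
  obtain s where s: "n = 2*s+1" using on oddE by blast
  have jd: "n div 2 = s" "odd n" using s by auto
  show ?thesis
  proof (rule cordial_of_counts[where w = "-int k + 1" and cv = 1 and ce = 1])
    show "m \<ge> 1" using m k by simp
  next
    fix a assume a: "a < k"
    show "-int k + 1 \<le> X a \<and> X a < -int k + 1 + int m \<and> -int k + 1 \<le> Y a \<and> Y a < -int k + 1 + int m
                 \<and> -int k + 1 \<le> S a \<and> S a < -int k + 1 + int m"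
    proof (cases "a < n")
      case True
      have "pp n a < n" using pp_lt[OF True] .
      moreover have "\<bar>int a - int (pp n a)\<bar> \<le> int (n div 2)" using d_bound[OF True] .
      ultimately show ?thesis using True a m jd s jn unfolding X_def Y_def S_def app_def by (simp add: abs_le_iff; linarith)
    next
      case False
      then show ?thesis using a m jn unfolding X_def Y_def S_def app_def by auto
    qed
  next
    fix a assume a: "a < k"
    have "a < n \<or> a = n" using a jn by auto
    then show "S a mod int m = (X a + Y a) mod int m"
      unfolding S_def X_def Y_def app_def by auto
  next
    fix z assume z: "-int k + 1 \<le> z" "z < -int k + 1 + int m"
    have "(z mod int m = 0) = (z = 0)" using z m k by (intro mod_win0) auto
    then show "1 \<le> (if z mod int m = 0 then 1 else 0) + cnt k X z + cnt k Y z \<and>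
      (if z mod int m = 0 then 1 else 0) + cnt k X z + cnt k Y z \<le> 1 + 1"
      unfolding cX cY using z m jn by (simp add: abs_if split: if_split_asm if_split; linarith)
  next
    fix z assume z: "-int k + 1 \<le> z" "z < -int k + 1 + int m"
    show "1 \<le> cnt k X z + cnt k Y z + cnt k S z \<and>
          cnt k X z + cnt k Y z + cnt k S z \<le> 1 + 1"
      unfolding cX cY cS jd using z m s jn by (simp add: abs_if split: if_split_asm if_split; linarith)
  qed
qed


lemma C4e:
  assumes m: "m = 2*k" and j: "2 \<le> j" "j + 1 \<le> k" and ev: "even j" and c: "m < 3*j"
  shows "Zm_cordial m (friendship_vertices j) (friendship_edges j)"
proof -
  define n where "n = j - 1"
  have jn: "j = n + 1" using j by (simp add: n_def)
  define p0 where "p0 = int k - int j + 1"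
  define X where "X = app n (\<lambda>a. p0 + int a) (\<lambda>a. 1)"
  define Y where "Y = app n (\<lambda>a. -(p0 + int (pp n a))) (\<lambda>a. int k)"
  define S where "S = app n (\<lambda>a. int a - int (pp n a)) (\<lambda>a. 1 - int k)"
  have cX: "cnt j X z = (if p0 \<le> z \<and> z < p0 + int n then 1 else 0) + (if 1 = z then 1 else 0)" for z
    unfolding X_def jn cnt_app cnt_X cnt_single ..
  have cY: "cnt j Y z = (if -(p0 + int n) < z \<and> z \<le> -p0 then 1 else 0) + (if int k = z then 1 else 0)" for z
    unfolding Y_def jn cnt_app cnt_Y cnt_single ..
  have cS: "cnt j S z = (if \<bar>z\<bar> \<le> int (n div 2) \<and> (odd n \<or> z \<noteq> 0) then 1 else 0) + (if 1 - int k = z then 1 else 0)" for z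
    unfolding S_def jn cnt_app cnt_S cnt_single ..
  have on: "odd n" using ev jn by simp
  obtain s where s: "n = 2*s+1" using on oddE by blast
  have jd: "n div 2 = s" "odd n" using s by auto
  show ?thesis
  proof (rule cordial_of_counts[where w = "-int k + 1" and cv = 0 and ce = 1])
    show "m \<ge> 1" using m j by simp
  next
    fix a assume a: "a < j"
    show "-int k + 1 \<le> X a \<and> X a < -int k + 1 + int m \<and> -int k + 1 \<le> Y a \<and> Y a < -int k + 1 + int m
                 \<and> -int k + 1 \<le> S a \<and> S a < -int k + 1 + int m"
    proof (cases "a < n")
      case True
      have "pp n a < n" using pp_lt[OF True] .
      moreover have "\<bar>int a - int (pp n a)\<bar> \<le> int (n div 2)" using d_bound[OF True] .
      ultimately show ?thesis using True a m j jd s jn unfolding X_def Y_def S_def app_def p0_def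
        by (simp add: abs_le_iff; linarith)
    next
      case False
      then have "a = n" using a jn by auto
      then show ?thesis using a m j jn unfolding X_def Y_def S_def app_def p0_def by simp
    qed
  next
    fix a assume a: "a < j"
    have "a < n \<or> a = n" using a jn by auto
    moreover have "(1 - int k) mod int m = (1 + int k) mod int m"
    proof -
      have e: "1 + int k = (1 - int k) + int m" using m by simp
      show ?thesis unfolding e mod_add_self2 ..
    qed
    ultimately show "S a mod int m = (X a + Y a) mod int m"
      unfolding S_def X_def Y_def app_def by auto
  next
    fix z assume z: "-int k + 1 \<le> z" "z < -int k + 1 + int m"
    have "(z mod int m = 0) = (z = 0)" using z m j by (intro mod_win0) auto
    then show "0 \<le> (if z mod int m = 0 then 1 else 0) + cnt j X z + cnt j Y z \<and>
      (if z mod int m = 0 then 1 else 0) + cnt j X z + cnt j Y z \<le> 0 + 1"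
      unfolding cX cY p0_def using z m j jn by (simp add: abs_if split: if_split_asm if_split; linarith)
  next
    fix z assume z: "-int k + 1 \<le> z" "z < -int k + 1 + int m"
    show "1 \<le> cnt j X z + cnt j Y z + cnt j S z \<and>
          cnt j X z + cnt j Y z + cnt j S z \<le> 1 + 1"
      unfolding cX cY cS jd p0_def using z m s j c jn by (simp add: abs_if split: if_split_asm if_split; linarith)
  qed
qed

lemma C4o:
  assumes m: "m = 2*k" and j: "3 \<le> j" "j + 1 \<le> k" and od: "odd j" and c: "m + 3 \<le> 3*j"
  shows "Zm_cordial m (friendship_vertices j) (friendship_edges j)"
proof -
  define n where "n = j - 2"
  have jn: "j = n + 1 + 1" using j by (simp add: n_def)
  define p0 where "p0 = int k - int j + 1"
  define X where "X = app (n+1) (\<lambda>a. p0 + int a) (\<lambda>a. 1)"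
  define Y where "Y = app (n+1) (app n (\<lambda>a. -(p0 + int (pp n a))) (\<lambda>a. -(p0 + int n))) (\<lambda>a. int k)"
  define S where "S = app (n+1) (app n (\<lambda>a. int a - int (pp n a)) (\<lambda>a. 0)) (\<lambda>a. 1 - int k)"
  have cX: "cnt j X z = (if p0 \<le> z \<and> z < p0 + int (n+1) then 1 else 0) + (if 1 = z then 1 else 0)" for z
    unfolding X_def jn cnt_app cnt_X cnt_single ..
  have cY: "cnt j Y z = (if -(p0 + int n) < z \<and> z \<le> -p0 then 1 else 0) + (if -(p0 + int n) = z then 1 else 0)
             + (if int k = z then 1 else 0)" for z
    unfolding Y_def jn cnt_app cnt_Y cnt_single ..
  have cS: "cnt j S z = (if \<bar>z\<bar> \<le> int (n div 2) \<and> (odd n \<or> z \<noteq> 0) then 1 else 0) + (if 0 = z then 1 else 0)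
             + (if 1 - int k = z then 1 else 0)" for z
    unfolding S_def jn cnt_app cnt_S cnt_single ..
  have on: "odd n" using od jn by simp
  obtain s where s: "n = 2*s+1" using on oddE by blast
  have jd: "n div 2 = s" "odd n" using s by auto
  show ?thesis
  proof (rule cordial_of_counts[where w = "-int k + 1" and cv = 0 and ce = 1])
    show "m \<ge> 1" using m j by simp
  next
    fix a assume a: "a < j"
    show "-int k + 1 \<le> X a \<and> X a < -int k + 1 + int m \<and> -int k + 1 \<le> Y a \<and> Y a < -int k + 1 + int m
                 \<and> -int k + 1 \<le> S a \<and> S a < -int k + 1 + int m"
    proof (cases "a < n")
      case True
      have "pp n a < n" using pp_lt[OF True] .
      moreover have "\<bar>int a - int (pp n a)\<bar> \<le> int (n div 2)" using d_bound[OF True] .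
      ultimately show ?thesis using True a m j jd s jn unfolding X_def Y_def S_def app_def p0_def
        by (simp add: abs_le_iff; linarith)
    next
      case False
      then have "a = n \<or> a = n + 1" using a jn by auto
      then show ?thesis using a m j jn unfolding X_def Y_def S_def app_def p0_def
        by (elim disjE; simp; linarith)
    qed
  next
    fix a assume a: "a < j"
    have "a < n \<or> a = n \<or> a = n + 1" using a jn by auto
    moreover have "(1 - int k) mod int m = (1 + int k) mod int m"
    proof -
      have e: "1 + int k = (1 - int k) + int m" using m by simp
      show ?thesis unfolding e mod_add_self2 ..
    qed
    ultimately show "S a mod int m = (X a + Y a) mod int m"
      unfolding S_def X_def Y_def app_def by auto
  next
    fix z assume z: "-int k + 1 \<le> z" "z < -int k + 1 + int m"
    have "(z mod int m = 0) = (z = 0)" using z m j by (intro mod_win0) auto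
    then show "0 \<le> (if z mod int m = 0 then 1 else 0) + cnt j X z + cnt j Y z \<and>
      (if z mod int m = 0 then 1 else 0) + cnt j X z + cnt j Y z \<le> 0 + 1"
      unfolding cX cY p0_def using z m j jn by (simp add: abs_if split: if_split_asm if_split; linarith)
  next
    fix z assume z: "-int k + 1 \<le> z" "z < -int k + 1 + int m"
    show "1 \<le> cnt j X z + cnt j Y z + cnt j S z \<and>
          cnt j X z + cnt j Y z + cnt j S z \<le> 1 + 1"
      unfolding cX cY cS jd p0_def using z m s j c jn by (simp add: abs_if split: if_split_asm if_split; linarith)
  qed
qed


lemma cnt_neg: "cnt n (\<lambda>b. c - int b) z = (if c - int n < z \<and> z \<le> c then 1 else 0)"
proof -
  have "inj_on (\<lambda>b. c - int b) {0..<n}" by (auto simp: inj_on_def)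
  moreover have "(\<exists>b<n. c - int b = z) \<longleftrightarrow> c - int n < z \<and> z \<le> c"
  proof
    assume "c - int n < z \<and> z \<le> c"
    then show "\<exists>b<n. c - int b = z" by (intro exI[of _ "nat (c - z)"]) auto
  qed auto
  ultimately show ?thesis by (simp add: cnt_inj)
qed

lemma cnt_2: "cnt n (\<lambda>b. c + 2 * int b) z = (if c \<le> z \<and> z < c + 2 * int n \<and> even (z - c) then 1 else 0)"
proof -
  have "inj_on (\<lambda>b. c + 2 * int b) {0..<n}" by (auto simp: inj_on_def)
  moreover have "(\<exists>b<n. c + 2 * int b = z) \<longleftrightarrow> c \<le> z \<and> z < c + 2 * int n \<and> even (z - c)"
  proof
    assume h: "c \<le> z \<and> z < c + 2 * int n \<and> even (z - c)"
    then obtain t where t: "z - c = 2 * t" by (metis evenE)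
    show "\<exists>b<n. c + 2 * int b = z" using h t by (intro exI[of _ "nat t"]) auto
  qed auto
  ultimately show ?thesis by (simp add: cnt_inj)
qed

lemma cnt_m2: "cnt n (\<lambda>b. c - 2 * int b) z = (if c - 2 * int n < z \<and> z \<le> c \<and> even (c - z) then 1 else 0)"
proof -
  have "inj_on (\<lambda>b. c - 2 * int b) {0..<n}" by (auto simp: inj_on_def)
  moreover have "(\<exists>b<n. c - 2 * int b = z) \<longleftrightarrow> c - 2 * int n < z \<and> z \<le> c \<and> even (c - z)"
  proof
    assume h: "c - 2 * int n < z \<and> z \<le> c \<and> even (c - z)"
    then obtain t where t: "c - z = 2 * t" by (metis evenE)
    show "\<exists>b<n. c - 2 * int b = z" using h t by (intro exI[of _ "nat t"]) auto
  qed auto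
  ultimately show ?thesis by (simp add: cnt_inj)
qed

lemma app3:
  assumes "\<And>a. a < n1 \<Longrightarrow> R (F1 a) (G1 a) (H1 a)" "\<And>b. b < n2 \<Longrightarrow> R (F2 b) (G2 b) (H2 b)" "a < n1 + n2"
  shows "R (app n1 F1 F2 a) (app n1 G1 G2 a) (app n1 H1 H2 a)"
proof (cases "a < n1")
  case True then show ?thesis using assms(1) by (simp add: app_def)
next
  case False then show ?thesis using assms(2)[of "a - n1"] assms(3) by (simp add: app_def)
qed

lemma app3':
  assumes "a < n1 + n2" "\<And>a. a < n1 \<Longrightarrow> R (F1 a) (G1 a) (H1 a)" "\<And>b. b < n2 \<Longrightarrow> R (F2 b) (G2 b) (H2 b)"
  shows "R (app n1 F1 F2 a) (app n1 G1 G2 a) (app n1 H1 H2 a)"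
  using app3[of n1 R F1 G1 H1 n2 F2 G2 H2 a] assms by blast

lemma C6:
  assumes m: "m = 12*s" and s: "s \<ge> 2"
  shows "Zm_cordial m (friendship_vertices (4*s)) (friendship_edges (4*s))"
proof -
  define t where "t = int s"
  have t2: "t \<ge> 2" using s by (simp add: t_def)
  have ts2: "int (s - 2) = t - 2" using s by (simp add: t_def)
  have mt: "int m = 12 * t" using m by (simp add: t_def)
  have jj: "4*s = 1 + ((s-2) + (1 + (1 + ((s-2) + (1 + 2*s)))))" using s by simp
  define X where "X = app 1 (\<lambda>b. 1) (app (s-2) (\<lambda>b. 3 + 2 * int b) (app 1 (\<lambda>b. 2*t-1)
     (app 1 (\<lambda>b. 2*t+1) (app (s-2) (\<lambda>b. 2*t+3 + 2 * int b) (app 1 (\<lambda>b. 4*t-1) (\<lambda>b. 2 + 2 * int b))))))"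
  define Y where "Y = app 1 (\<lambda>b. 5*t) (app (s-2) (\<lambda>b. 6*t-1 - int b) (app 1 (\<lambda>b. 6*t)
     (app 1 (\<lambda>b. 5*t-1) (app (s-2) (\<lambda>b. 5*t-2 - int b) (app 1 (\<lambda>b. 6*t+1) (\<lambda>b. 10*t-1 - int b))))))"
  define S where "S = app 1 (\<lambda>b. 5*t+1) (app (s-2) (\<lambda>b. 6*t+2 + int b) (app 1 (\<lambda>b. 8*t-1)
     (app 1 (\<lambda>b. 7*t) (app (s-2) (\<lambda>b. 7*t+1 + int b) (app 1 (\<lambda>b. 10*t) (\<lambda>b. 10*t+1 + int b))))))"
  have cX: "cnt (4*s) X z = (if 1 = z then 1 else 0) + ((if 3 \<le> z \<and> z < 3 + 2 * int (s-2) \<and> even (z - 3) then 1 else 0)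
     + ((if 2*t-1 = z then 1 else 0) + ((if 2*t+1 = z then 1 else 0)
     + ((if 2*t+3 \<le> z \<and> z < 2*t+3 + 2 * int (s-2) \<and> even (z - (2*t+3)) then 1 else 0)
     + ((if 4*t-1 = z then 1 else 0) + (if 2 \<le> z \<and> z < 2 + 2 * int (2*s) \<and> even (z - 2) then 1 else 0))))))" for z
    unfolding X_def jj cnt_app cnt_single cnt_2 ..
  have cY: "cnt (4*s) Y z = (if 5*t = z then 1 else 0) + ((if 6*t-1 - int (s-2) < z \<and> z \<le> 6*t-1 then 1 else 0)
     + ((if 6*t = z then 1 else 0) + ((if 5*t-1 = z then 1 else 0)
     + ((if 5*t-2 - int (s-2) < z \<and> z \<le> 5*t-2 then 1 else 0)
     + ((if 6*t+1 = z then 1 else 0) + (if 10*t-1 - int (2*s) < z \<and> z \<le> 10*t-1 then 1 else 0))))))" for z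
    unfolding Y_def jj cnt_app cnt_single cnt_neg ..
  have cS: "cnt (4*s) S z = (if 5*t+1 = z then 1 else 0) + ((if 6*t+2 \<le> z \<and> z < 6*t+2 + int (s-2) then 1 else 0)
     + ((if 8*t-1 = z then 1 else 0) + ((if 7*t = z then 1 else 0)
     + ((if 7*t+1 \<le> z \<and> z < 7*t+1 + int (s-2) then 1 else 0)
     + ((if 10*t = z then 1 else 0) + (if 10*t+1 \<le> z \<and> z < 10*t+1 + int (2*s) then 1 else 0))))))" for z
    unfolding S_def jj cnt_app cnt_single cnt_X ..
  have i2s: "int (2*s) = 2*t" by (simp add: t_def)
  have hX: "cnt (4*s) X z = (if 1 \<le> z \<and> z \<le> 4*t then 1 else 0)" for z
  proof (cases "even z")
    case True
    then obtain q where q: "z = 2*q" by (metis evenE)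
    show ?thesis unfolding cX q ts2 i2s using t2 by simp presburger
  next
    case False
    then obtain q where q: "z = 2*q+1" by (metis oddE)
    show ?thesis unfolding cX q ts2 i2s using t2 by simp presburger
  qed
  have hYS: "int (cnt (4*s) Y z) + int (cnt (4*s) S z) = (if 4*t+1 \<le> z \<and> z \<le> 12*t then 1 else 0)" for z
    unfolding cY cS ts2 i2s using t2 by (simp; (smt (verit))?)
  define R where "R x y u \<longleftrightarrow> 1 \<le> x \<and> x < 1 + int m \<and> 1 \<le> y \<and> y < 1 + int m \<and> 1 \<le> u \<and> u < 1 + int m
     \<and> u mod int m = (x + y) mod int m" for x y u
  have Rall: "R (X a) (Y a) (S a)" if a: "a < 4*s" for a
  proof -
    have a': "a < 1 + ((s-2) + (1 + (1 + ((s-2) + (1 + 2*s)))))" using a by (simp only: jj)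
    show ?thesis unfolding X_def Y_def S_def
    apply (rule app3'[where R = R, OF a'])
    subgoal for b using t2 ts2 i2s by (simp add: R_def mt algebra_simps; linarith)
    apply (rule app3'[where R = R], assumption)
    subgoal for b using t2 ts2 i2s by (simp add: R_def mt algebra_simps; linarith)
    apply (rule app3'[where R = R], assumption)
    subgoal for b using t2 ts2 i2s by (simp add: R_def mt algebra_simps; linarith)
    apply (rule app3'[where R = R], assumption)
    subgoal for b using t2 ts2 i2s by (simp add: R_def mt algebra_simps; linarith)
    apply (rule app3'[where R = R], assumption)
    subgoal for b using t2 ts2 i2s by (simp add: R_def mt algebra_simps; linarith)
    apply (rule app3'[where R = R], assumption)
    subgoal for b using t2 ts2 i2s by (simp add: R_def mt algebra_simps; linarith)
    subgoal for b using t2 ts2 i2s by (simp add: R_def mt algebra_simps; linarith)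
    done
  qed
  show ?thesis
  proof (rule cordial_of_counts[where w = 1 and cv = 0 and ce = 1])
    show "m \<ge> 1" using m s by simp
  next
    fix a assume "a < 4*s"
    then show "1 \<le> X a \<and> X a < 1 + int m \<and> 1 \<le> Y a \<and> Y a < 1 + int m
                 \<and> 1 \<le> S a \<and> S a < 1 + int m" using Rall unfolding R_def by blast
  next
    fix a assume "a < 4*s"
    then show "S a mod int m = (X a + Y a) mod int m" using Rall unfolding R_def by blast
  next
    fix z assume z: "1 \<le> z" "z < 1 + int m"
    have "(z mod int m = 0) = (z = int m)"
    proof -
      have "(z mod int m = 0) = ((z - int m) mod int m = 0)" by (simp add: mod_diff_right_eq[symmetric])
      also have "\<dots> = (z - int m = 0)" using z m s by (intro mod_win0) auto
      finally show ?thesis by simp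
    qed
    moreover have "cnt (4*s) Y z \<le> (if 4*t+1 \<le> z \<and> z \<le> 10*t then 1 else 0)"
      unfolding cY ts2 i2s using t2 by (simp; (smt (verit))?)
    ultimately have A: "(z mod int m = 0) = (z = int m)" "cnt (4*s) Y z \<le> (if 4*t+1 \<le> z \<and> z \<le> 10*t then 1 else 0)"
      by blast+
    have B: "cnt (4*s) X z = (if 1 \<le> z \<and> z \<le> 4*t then 1 else 0)" by (rule hX)
    show "0 \<le> (if z mod int m = 0 then 1 else 0) + cnt (4*s) X z + cnt (4*s) Y z \<and>
      (if z mod int m = 0 then 1 else 0) + cnt (4*s) X z + cnt (4*s) Y z \<le> 0 + 1"
    proof -
      obtain c where c: "c = cnt (4*s) Y z" by blast
      show ?thesis unfolding B c[symmetric] using A[unfolded c[symmetric]] mt t2 z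
        by (simp split: if_split_asm if_split; linarith)
    qed
  next
    fix z assume z: "1 \<le> z" "z < 1 + int m"
    show "1 \<le> cnt (4*s) X z + cnt (4*s) Y z + cnt (4*s) S z \<and>
          cnt (4*s) X z + cnt (4*s) Y z + cnt (4*s) S z \<le> 1 + 1"
      using hYS[of z] unfolding hX using mt t2 z by (simp split: if_split_asm if_split; linarith)
  qed
qed


lemma C7:
  assumes m: "m = 12*s+2" and s: "s \<ge> 2"
  shows "Zm_cordial m (friendship_vertices (4*s+1)) (friendship_edges (4*s+1))"
proof -
  define t where "t = int s"
  have t2: "t \<ge> 2" using s by (simp add: t_def)
  have ts2: "int (s - 2) = t - 2" using s by (simp add: t_def)
  have i2s: "int (2*s - 1) = 2*t - 1" using s by (simp add: t_def)
  have iss: "int s = t" by (simp add: t_def)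
  have mt: "int m = 12 * t + 2" using m by (simp add: t_def)
  have jj: "4*s+1 = 1 + ((2*s-1) + (s + ((s-2) + (1 + (1 + 1)))))" using s by simp
  define X where "X = app 1 (\<lambda>b. 4*t) (app (2*s-1) (\<lambda>b. (4*t-2) - 2 * int b) (app s (\<lambda>b. (4*t-1) - 2 * int b)
     (app (s-2) (\<lambda>b. (2*t-3) - 2 * int b) (app 1 (\<lambda>b. 2*t-1) (app 1 (\<lambda>b. 4*t+1) (\<lambda>b. 1))))))"
  define Y where "Y = app 1 (\<lambda>b. 8*t+3) (app (2*s-1) (\<lambda>b. 8*t+4 + int b) (app s (\<lambda>b. 4*t+3 + int b)
     (app (s-2) (\<lambda>b. 5*t+3 + int b) (app 1 (\<lambda>b. 4*t+2) (app 1 (\<lambda>b. 6*t+2) (\<lambda>b. 7*t+1))))))"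
  define S where "S = app 1 (\<lambda>b. 1) (app (2*s-1) (\<lambda>b. (12*t+2) - int b) (app s (\<lambda>b. (8*t+2) - int b)
     (app (s-2) (\<lambda>b. 7*t - int b) (app 1 (\<lambda>b. 6*t+1) (app 1 (\<lambda>b. 10*t+3) (\<lambda>b. 7*t+2))))))"
  have cX: "cnt (4*s+1) X z = (if 4*t = z then 1 else 0)
     + ((if (4*t-2) - 2 * int (2*s-1) < z \<and> z \<le> 4*t-2 \<and> even ((4*t-2) - z) then 1 else 0)
     + ((if (4*t-1) - 2 * int s < z \<and> z \<le> 4*t-1 \<and> even ((4*t-1) - z) then 1 else 0)
     + ((if (2*t-3) - 2 * int (s-2) < z \<and> z \<le> 2*t-3 \<and> even ((2*t-3) - z) then 1 else 0)
     + ((if 2*t-1 = z then 1 else 0) + ((if 4*t+1 = z then 1 else 0) + (if 1 = z then 1 else 0))))))" for z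
    unfolding X_def jj cnt_app cnt_single cnt_m2 ..
  have cY: "cnt (4*s+1) Y z = (if 8*t+3 = z then 1 else 0)
     + ((if 8*t+4 \<le> z \<and> z < 8*t+4 + int (2*s-1) then 1 else 0)
     + ((if 4*t+3 \<le> z \<and> z < 4*t+3 + int s then 1 else 0)
     + ((if 5*t+3 \<le> z \<and> z < 5*t+3 + int (s-2) then 1 else 0)
     + ((if 4*t+2 = z then 1 else 0) + ((if 6*t+2 = z then 1 else 0) + (if 7*t+1 = z then 1 else 0))))))" for z
    unfolding Y_def jj cnt_app cnt_single cnt_X ..
  have cS: "cnt (4*s+1) S z = (if 1 = z then 1 else 0)
     + ((if (12*t+2) - int (2*s-1) < z \<and> z \<le> 12*t+2 then 1 else 0)
     + ((if (8*t+2) - int s < z \<and> z \<le> 8*t+2 then 1 else 0)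
     + ((if 7*t - int (s-2) < z \<and> z \<le> 7*t then 1 else 0)
     + ((if 6*t+1 = z then 1 else 0) + ((if 10*t+3 = z then 1 else 0) + (if 7*t+2 = z then 1 else 0))))))" for z
    unfolding S_def jj cnt_app cnt_single cnt_neg ..
  have hX: "cnt (4*s+1) X z = (if 1 \<le> z \<and> z \<le> 4*t+1 then 1 else 0)" for z
  proof (cases "even z")
    case True
    then obtain q where q: "z = 2*q" by (metis evenE)
    show ?thesis unfolding cX q ts2 i2s iss using t2 by simp presburger
  next
    case False
    then obtain q where q: "z = 2*q+1" by (metis oddE)
    show ?thesis unfolding cX q ts2 i2s iss using t2 by simp presburger
  qed
  have hYS: "int (cnt (4*s+1) Y z) + int (cnt (4*s+1) S z) =
      (if 4*t+2 \<le> z \<and> z \<le> 12*t+2 then 1 else 0) + (if z = 1 then 1 else 0)" for z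
    unfolding cY cS ts2 i2s iss using t2 by (simp; (smt (verit))?)
  have cYb: "cnt (4*s+1) Y z \<le> (if 4*t+2 \<le> z \<and> z \<le> 10*t+2 then 1 else 0)" for z
    unfolding cY ts2 i2s iss using t2 by (simp; (smt (verit))?)
  define R where "R x y u \<longleftrightarrow> 1 \<le> x \<and> x < 1 + int m \<and> 1 \<le> y \<and> y < 1 + int m \<and> 1 \<le> u \<and> u < 1 + int m
     \<and> u mod int m = (x + y) mod int m" for x y u
  have Rall: "R (X a) (Y a) (S a)" if a: "a < 4*s+1" for a
  proof -
    have a': "a < 1 + ((2*s-1) + (s + ((s-2) + (1 + (1 + 1)))))" using a by (simp only: jj)
    have r1: "R (4*t) (8*t+3) 1"
    proof -
      have "(4*t + (8*t+3)) mod int m = 1 mod int m"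
      proof -
        have e: "4*t + (8*t+3) = 1 + int m" using mt by simp
        show ?thesis unfolding e mod_add_self2 ..
      qed
      then show ?thesis unfolding R_def using t2 mt by simp
    qed
    show ?thesis unfolding X_def Y_def S_def
    apply (rule app3'[where R = R, OF a'])
    subgoal using r1 by simp
    apply (rule app3'[where R = R], assumption)
    subgoal for b using t2 ts2 i2s iss by (simp add: R_def mt algebra_simps; linarith)
    apply (rule app3'[where R = R], assumption)
    subgoal for b using t2 ts2 i2s iss by (simp add: R_def mt algebra_simps; linarith)
    apply (rule app3'[where R = R], assumption)
    subgoal for b using t2 ts2 i2s iss by (simp add: R_def mt algebra_simps; linarith)
    apply (rule app3'[where R = R], assumption)
    subgoal for b using t2 ts2 i2s iss by (simp add: R_def mt algebra_simps; linarith)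
    apply (rule app3'[where R = R], assumption)
    subgoal for b using t2 ts2 i2s iss by (simp add: R_def mt algebra_simps; linarith)
    subgoal for b using t2 ts2 i2s iss by (simp add: R_def mt algebra_simps; linarith)
    done
  qed
  show ?thesis
  proof (rule cordial_of_counts[where w = 1 and cv = 0 and ce = 1])
    show "m \<ge> 1" using m s by simp
  next
    fix a assume "a < 4*s+1"
    then show "1 \<le> X a \<and> X a < 1 + int m \<and> 1 \<le> Y a \<and> Y a < 1 + int m
                 \<and> 1 \<le> S a \<and> S a < 1 + int m" using Rall unfolding R_def by blast
  next
    fix a assume "a < 4*s+1"
    then show "S a mod int m = (X a + Y a) mod int m" using Rall unfolding R_def by blast
  next
    fix z assume z: "1 \<le> z" "z < 1 + int m"
    have A: "(z mod int m = 0) = (z = int m)"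
    proof -
      have "(z mod int m = 0) = ((z - int m) mod int m = 0)" by (simp add: mod_diff_right_eq[symmetric])
      also have "\<dots> = (z - int m = 0)" using z m s by (intro mod_win0) auto
      finally show ?thesis by simp
    qed
    show "0 \<le> (if z mod int m = 0 then 1 else 0) + cnt (4*s+1) X z + cnt (4*s+1) Y z \<and>
      (if z mod int m = 0 then 1 else 0) + cnt (4*s+1) X z + cnt (4*s+1) Y z \<le> 0 + 1"
    proof -
      obtain c where c: "c = cnt (4*s+1) Y z" by blast
      show ?thesis unfolding hX c[symmetric] using A cYb[of z, folded c] mt t2 z
        by (simp split: if_split_asm if_split; linarith)
    qed
  next
    fix z assume z: "1 \<le> z" "z < 1 + int m"
    show "1 \<le> cnt (4*s+1) X z + cnt (4*s+1) Y z + cnt (4*s+1) S z \<and>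
          cnt (4*s+1) X z + cnt (4*s+1) Y z + cnt (4*s+1) S z \<le> 1 + 1"
    proof -
      obtain c d where c: "c = cnt (4*s+1) Y z" "d = cnt (4*s+1) S z" by blast
      show ?thesis unfolding hX c(1)[symmetric] c(2)[symmetric] using hYS[of z, folded c] mt t2 z
        by (simp split: if_split_asm if_split; linarith)
    qed
  qed
qed


lemma C8: "Zm_cordial 12 (friendship_vertices 4) (friendship_edges 4)"
proof -
  have jj: "(4::nat) = 1 + (1 + (1 + (1)))" by simp
  define X where "X = (app 1 (\<lambda>b. 1) (app 1 (\<lambda>b. 2) (app 1 (\<lambda>b. 7) (\<lambda>b. 8))))"
  define Y where "Y = (app 1 (\<lambda>b. 11) (app 1 (\<lambda>b. 3) (app 1 (\<lambda>b. 9) (\<lambda>b. 10))))"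
  define S where "S = (app 1 (\<lambda>b. 0) (app 1 (\<lambda>b. 5) (app 1 (\<lambda>b. 4) (\<lambda>b. 6))))"
  have cX: "cnt 4 X z = cnt (1 + (1 + (1 + (1)))) X z" for z by (simp only: jj)
  have cY: "cnt 4 Y z = cnt (1 + (1 + (1 + (1)))) Y z" for z by (simp only: jj)
  have cS: "cnt 4 S z = cnt (1 + (1 + (1 + (1)))) S z" for z by (simp only: jj)
  note cc = cX cY cS
  show ?thesis
  proof (rule cordial_of_counts[where w = 0 and cv = 0 and ce = 1])
    show "(12::nat) \<ge> 1" by simp
  next
    fix a :: nat assume a: "a < 4"
    then have "a = 0 \<or> a = 1 \<or> a = 2 \<or> a = 3" by auto
    then show "0 \<le> X a \<and> X a < 0 + int 12 \<and> 0 \<le> Y a \<and> Y a < 0 + int 12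
                 \<and> 0 \<le> S a \<and> S a < 0 + int 12" unfolding X_def Y_def S_def by (elim disjE) (simp_all add: app_def)
  next
    fix a :: nat assume a: "a < 4"
    then have "a = 0 \<or> a = 1 \<or> a = 2 \<or> a = 3" by auto
    then show "S a mod int 12 = (X a + Y a) mod int 12" unfolding X_def Y_def S_def by (elim disjE) (simp_all add: app_def)
  next
    fix z :: int assume z: "0 \<le> z" "z < 0 + int 12"
    have A: "(z mod int 12 = 0) = (z = 0)" using z by (intro mod_win0) auto
    show "0 \<le> (if z mod int 12 = 0 then 1 else 0) + cnt 4 X z + cnt 4 Y z \<and>
      (if z mod int 12 = 0 then 1 else 0) + cnt 4 X z + cnt 4 Y z \<le> 0 + 1"
      unfolding A cc unfolding X_def Y_def cnt_app cnt_single using z by (simp; (smt (verit))?)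
  next
    fix z :: int assume z: "0 \<le> z" "z < 0 + int 12"
    show "1 \<le> cnt 4 X z + cnt 4 Y z + cnt 4 S z \<and>
          cnt 4 X z + cnt 4 Y z + cnt 4 S z \<le> 1 + 1"
      unfolding cc unfolding X_def Y_def S_def cnt_app cnt_single using z by (simp; (smt (verit))?)
  qed
qed

lemma C9: "Zm_cordial 14 (friendship_vertices 5) (friendship_edges 5)"
proof -
  have jj: "(5::nat) = 1 + (1 + (1 + (1 + (1))))" by simp
  define X where "X = (app 1 (\<lambda>b. 3) (app 1 (\<lambda>b. 4) (app 1 (\<lambda>b. 5) (app 1 (\<lambda>b. 2) (\<lambda>b. 7)))))"
  define Y where "Y = (app 1 (\<lambda>b. 11) (app 1 (\<lambda>b. 9) (app 1 (\<lambda>b. 10) (app 1 (\<lambda>b. 6) (\<lambda>b. 12)))))"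
  define S where "S = (app 1 (\<lambda>b. 0) (app 1 (\<lambda>b. 13) (app 1 (\<lambda>b. 1) (app 1 (\<lambda>b. 8) (\<lambda>b. 5)))))"
  have cX: "cnt 5 X z = cnt (1 + (1 + (1 + (1 + (1))))) X z" for z by (simp only: jj)
  have cY: "cnt 5 Y z = cnt (1 + (1 + (1 + (1 + (1))))) Y z" for z by (simp only: jj)
  have cS: "cnt 5 S z = cnt (1 + (1 + (1 + (1 + (1))))) S z" for z by (simp only: jj)
  note cc = cX cY cS
  show ?thesis
  proof (rule cordial_of_counts[where w = 0 and cv = 0 and ce = 1])
    show "(14::nat) \<ge> 1" by simp
  next
    fix a :: nat assume a: "a < 5"
    then have "a = 0 \<or> a = 1 \<or> a = 2 \<or> a = 3 \<or> a = 4" by auto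
    then show "0 \<le> X a \<and> X a < 0 + int 14 \<and> 0 \<le> Y a \<and> Y a < 0 + int 14
                 \<and> 0 \<le> S a \<and> S a < 0 + int 14" unfolding X_def Y_def S_def by (elim disjE) (simp_all add: app_def)
  next
    fix a :: nat assume a: "a < 5"
    then have "a = 0 \<or> a = 1 \<or> a = 2 \<or> a = 3 \<or> a = 4" by auto
    then show "S a mod int 14 = (X a + Y a) mod int 14" unfolding X_def Y_def S_def by (elim disjE) (simp_all add: app_def)
  next
    fix z :: int assume z: "0 \<le> z" "z < 0 + int 14"
    have A: "(z mod int 14 = 0) = (z = 0)" using z by (intro mod_win0) auto
    show "0 \<le> (if z mod int 14 = 0 then 1 else 0) + cnt 5 X z + cnt 5 Y z \<and>
      (if z mod int 14 = 0 then 1 else 0) + cnt 5 X z + cnt 5 Y z \<le> 0 + 1"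
      unfolding A cc unfolding X_def Y_def cnt_app cnt_single using z by (simp; (smt (verit))?)
  next
    fix z :: int assume z: "0 \<le> z" "z < 0 + int 14"
    show "1 \<le> cnt 5 X z + cnt 5 Y z + cnt 5 S z \<and>
          cnt 5 X z + cnt 5 Y z + cnt 5 S z \<le> 1 + 1"
      unfolding cc unfolding X_def Y_def S_def cnt_app cnt_single using z by (simp; (smt (verit))?)
  qed
qed


lemma ar1: fixes m j :: nat
  assumes "m mod 12 = 0 \<or> m mod 12 = 2" "3*j = m"
  shows "j = 4*(m div 12) \<and> m = 12*(m div 12)"
proof -
  define q where "q = m div 12"
  have m: "m = 12*q + m mod 12" unfolding q_def by simp
  show ?thesis
  proof (cases "m mod 12 = 0")
    case True then show ?thesis using m assms(2) unfolding q_def[symmetric] by simp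
  next
    case False
    then have "m = 12*q + 2" using m assms(1) by simp
    then have "3*j = 12*q+2" using assms(2) by simp
    then show ?thesis by presburger
  qed
qed
lemma ar2: fixes m j :: nat
  assumes "m mod 12 = 0 \<or> m mod 12 = 2" "3*j = m + 1"
  shows "j = 4*(m div 12) + 1 \<and> m = 12*(m div 12) + 2 \<and> m mod 12 = 2"
proof -
  define q where "q = m div 12"
  have m: "m = 12*q + m mod 12" unfolding q_def by simp
  show ?thesis
  proof (cases "m mod 12 = 0")
    case True
    then have "3*j = 12*q+1" using m assms(2) by simp
    then have False by presburger
    then show ?thesis by simp
  next
    case False
    then have m2: "m mod 12 = 2" using assms(1) by simp
    then have "m = 12*q + 2" using m by simp
    then show ?thesis using assms(2) m2 unfolding q_def[symmetric] by simp
  qed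
qed
lemma ar3: fixes m k :: nat
  assumes "m = 2*k" "m mod 12 = 0" "1 \<le> k"
  shows "even k \<and> k \<ge> 2"
proof -
  define q where "q = m div 12"
  have m: "m = 12*q" using div_mult_mod_eq[of m 12] assms(2) unfolding q_def by simp
  then have "k = 6*q" using assms(1) by simp
  then show ?thesis using assms(3) by simp
qed
lemma ar4: fixes m k j :: nat
  assumes "m = 2*k" "m < 3*j" "3*j \<noteq> m + 1" "odd j" "j \<le> k"
  shows "m + 3 \<le> 3*j \<and> 3 \<le> j"
proof -
  obtain i where j: "j = 2*i+1" using assms(4) oddE by blast
  show ?thesis using assms(1,2,3,5) unfolding j by simp
qed
lemma ar5: fixes m :: nat
  assumes "m mod 12 \<notin> {2, 4, 6, 8, 10}" "\<not> odd m"
  shows "m mod 12 = 0"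
proof -
  obtain q r where qr: "q = m div 12" "r = m mod 12" by blast
  have m: "m = 12*q + r" using qr div_mult_mod_eq[of m 12] by simp
  have "r < 12" using qr by simp
  moreover have "r \<noteq> 2" "r \<noteq> 4" "r \<noteq> 6" "r \<noteq> 8" "r \<noteq> 10" using assms(1) qr by auto
  moreover have "even (12*q + r)" using assms(2) m by simp
  ultimately have "r = 0" by presburger
  then show ?thesis using qr by simp
qed
lemma ar6: fixes m :: nat assumes "m mod 12 = 2" shows "even m"
proof -
  have "m = 12*(m div 12) + 2" using assms by (metis div_mult_mod_eq mult.commute)
  then show ?thesis by presburger
qed

lemma part_odd:
  assumes "odd m" "1 \<le> j" "j \<le> m div 2"
  shows "Zm_cordial m (friendship_vertices j) (friendship_edges j)"
proof -
  obtain k where k: "m = 2*k+1" using assms(1) oddE by blast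
  have jk: "j \<le> k" using assms(3) k by simp
  show ?thesis
  proof (cases "odd j \<or> 3*j \<le> m")
    case True
    then show ?thesis using C1[OF k assms(2) jk] by blast
  next
    case False
    then have ev: "even j" "m < 3*j" by auto
    obtain i where i: "j = 2*i" using ev(1) evenE by blast
    have "2 \<le> j" using i assms(2) by simp
    then show ?thesis using C2[OF k _ jk] ev by blast
  qed
qed

lemma part_even:
  assumes m: "m = 2*k" and mm: "m mod 12 = 0 \<or> m mod 12 = 2" and j: "1 \<le> j" "j \<le> k"
    and jk: "m mod 12 = 2 \<Longrightarrow> j + 1 \<le> k"
  shows "Zm_cordial m (friendship_vertices j) (friendship_edges j)"
proof -
  define q where "q = m div 12"
  show ?thesis
  proof (cases "3*j < m")
    case True
    then show ?thesis using C3[OF m j(1)] by blast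
  next
    case c1: False
    show ?thesis
    proof (cases "3*j = m")
      case True
      from ar1[OF mm True] have jq: "j = 4*q" and mq: "m = 12*q" unfolding q_def by auto
      show ?thesis
      proof (cases "q = 1")
        case True
        then have "m = 12" "j = 4" using jq mq by simp_all
        then show ?thesis using C8 by simp
      next
        case False
        then have "q \<ge> 2" using jq j by simp
        then have "Zm_cordial m (friendship_vertices (4*q)) (friendship_edges (4*q))" using C6[OF mq] by blast
        then show ?thesis using jq by simp
      qed
    next
      case c2: False
      show ?thesis
      proof (cases "3*j = m + 1")
        case True
        from ar2[OF mm True] have jq: "j = 4*q+1" and mq: "m = 12*q+2" and m12: "m mod 12 = 2" unfolding q_def by auto
        show ?thesis
        proof (cases "q = 1")
          case True
          then have "m = 14" "j = 5" using jq mq by simp_all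
          then show ?thesis using C9 by simp
        next
          case False
          have "j + 1 \<le> k" using m12 by (rule jk)
          then have "q \<noteq> 0" using jq mq m by auto
          then have "q \<ge> 2" using False by simp
          then have "Zm_cordial m (friendship_vertices (4*q+1)) (friendship_edges (4*q+1))" using C7[OF mq] by blast
          then show ?thesis using jq by simp
        qed
      next
        case c3: False
        show ?thesis
        proof (cases "j = k")
          case True
          have "m mod 12 \<noteq> 2" using jk True by auto
          then have "m mod 12 = 0" using mm by simp
          then have "even k \<and> k \<ge> 2" using ar3[OF m] j True by simp
          then show ?thesis using C5[OF m] True by simp
        next
          case False
          then have jk1: "j + 1 \<le> k" using j by simp
          have mj: "m < 3*j" using c1 c2 by simp
          show ?thesis
          proof (cases "even j")
            case True
            obtain i where i: "j = 2*i" using True evenE by blast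
            have "2 \<le> j" using i j by simp
            then show ?thesis using C4e[OF m _ jk1 True mj] by blast
          next
            case False
            have "m + 3 \<le> 3*j \<and> 3 \<le> j" using ar4[OF m mj c3 False] j by simp
            then show ?thesis using C4o[OF m _ jk1 False] by blast
          qed
        qed
      qed
    qed
  qed
qed

theorem theorem10p1:
  fixes m :: nat
  assumes "m \<ge> 1"
  shows "(m mod 12 \<notin> {2, 4, 6, 8, 10} \<longrightarrow>
            (\<forall>j::nat. 1 \<le> j \<and> j \<le> m div 2 \<longrightarrow>
               Zm_cordial m (friendship_vertices j) (friendship_edges j)))
       \<and> (m mod 12 = 2 \<longrightarrow>
            (\<forall>j::nat. 1 \<le> j \<and> j \<le> m div 2 - 1 \<longrightarrow>
               Zm_cordial m (friendship_vertices j) (friendship_edges j)))"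
proof (intro conjI impI allI)
  fix j :: nat
  assume h: "m mod 12 \<notin> {2, 4, 6, 8, 10}" and j: "1 \<le> j \<and> j \<le> m div 2"
  show "Zm_cordial m (friendship_vertices j) (friendship_edges j)"
  proof (cases "odd m")
    case True
    then show ?thesis using part_odd j by blast
  next
    case False
    define k where "k = m div 2"
    have m2: "m = 2 * k" using False unfolding k_def by simp
    have m0: "m mod 12 = 0" using ar5[OF h False] .
    have jj: "1 \<le> j" "j \<le> k" using j unfolding k_def by auto
    show ?thesis using part_even[OF m2 _ jj] m0 by simp
  qed
next
  fix j :: nat
  assume h: "m mod 12 = 2" and j: "1 \<le> j \<and> j \<le> m div 2 - 1"
  define k where "k = m div 2"
  have "even m" using ar6[OF h] .
  then have m2: "m = 2 * k" unfolding k_def by simp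
  have j1: "1 \<le> j" "j \<le> k" "j + 1 \<le> k" using j unfolding k_def by arith+
  show "Zm_cordial m (friendship_vertices j) (friendship_edges j)"
    using part_even[OF m2 _ j1(1) j1(2)] j1(3) h by simp
qed

end
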